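(* In the setting described in the context, fix $\mathbf W^{[t]}\in\mathcal B$ with $\mathbf F^{[t]}:=\mathbf F(\mathbf W^{[t]})$ invertible, let $\bm\Phi^{[t]}=(\mathbf F^{[t]})^{-2}$, and let $\xi_k^{[t]},\eta_k^{[t]},\beta_k^{[t]},\bm\Sigma_1^{[t]},\bm\Sigma_2^{[t]},\mathbf Q^{[t]}$ be the quantities of the context evaluated at $\mathbf W^{[t]}$. Define for $\mathbf W=[\mathbf w_{c1},\dots,\mathbf w_{cK},\mathbf W_s]$ $$r_k^{[t]}(\mathbf W)=\log(1+\xi_k^{[t]})+2\Re\{\mathbf h_k^H\mathbf w_{ck}\eta_k^{[t]}\}-\xi_k^{[t]}-\beta_k^{[t]}\Big(\sum_{j=1}^K|\mathbf h_k^H\mathbf w_{cj}|^2+\|\mathbf h_k^H\mathbf W_s\|_F^2+\sigma_{ck}^2\Big).$$ Then the problem $$\max_{\mathbf W\in\mathcal B}\ \delta_c\sum_{k=1}^K r_k^{[t]}(\mathbf W)+\delta_s\big(\mathrm{tr}(\mathbf F(\mathbf W)\bm\Phi^{[t]})-2\,\mathrm{tr}(\mathbf F^{[t]})\big)$$ can be recast as $$\max_{\mathbf W\in\mathcal B}\ 2\delta_c\Re\{\mathrm{tr}(\mathbf W_c\bm\Sigma_1^{[t]}\mathbf H^H)\}+\delta_s\Re\{\mathrm{tr}(\mathbf W\mathbf W^H\mathbf Q^{[t]})\}-\delta_c\,\mathrm{tr}(\mathbf W\mathbf W^H\mathbf H\bm\Sigma_2^{[t]}\mathbf H^H),$$ i.e.,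 the two objectives differ on $\mathcal B$ by a quantity that does not depend on $\mathbf W$.
   Context: Positive integers $N_t,N_r,K,M,L$, nonnegative integer $N_s$; channels $\mathbf h_k\in\mathbb C^{N_t}$, $\mathbf H=[\mathbf h_1,\dots,\mathbf h_K]$, noise variances $\sigma_{ck}^2>0$; $\sigma_s^2>0$; weights $\delta_c,\delta_s\ge0$; $P_t>0$. $\mathbf W=[\mathbf W_c,\mathbf W_s]\in\mathbb C^{N_t\times(K+N_s)}$, $\mathbf W_c=[\mathbf w_{c1},\dots,\mathbf w_{cK}]$, $\mathbf R_x=\mathbf W\mathbf W^H$; $\mathcal B=\{\mathbf W:\mathrm{tr}(\mathbf W\mathbf W^H)=P_t\}$. Sensing model: differentiable $\mathbf a:\mathbb R^2\to\mathbb C^{N_t}$, $\mathbf b:\mathbb R^2\to\mathbb C^{N_r}$; parameters $\theta_m,\phi_m\in\mathbb R,\alpha_m\in\mathbb C$; $\mathbf A=[\mathbf a(\theta_m,\phi_m)]_m$, $\mathbf B=[\mathbf b(\theta_m,\phi_m)]_m$, $\mathbf U=\mathrm{diag}(\alpha_m)$; $\dot{\mathbf A}_\theta,\dot{\mathbf A}_\phi,\dot{\mathbf B}_\theta,\dot{\mathbf B}_\phi$ have $m$-th columns the partial derivatives of $\mathbf a$ resp. $\mathbf b$ with respect to first resp. second argument at $(\theta_m,\phi_m)$. $\mathbf F(\mathbf W)=\frac{2L}{\sigma_s^2}\begin{bmatrix}\Re\mathbf F_{11}&\Re\mathbf F_{12}&\Re\mathbf F_{13}&-\Im\mathbf F_{13}\\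 \Re\mathbf F_{12}^{\mathsf T}&\Re\mathbf F_{22}&\Re\mathbf F_{23}&-\Im\mathbf F_{23}\\ \Re\mathbf F_{13}^{\mathsf T}&\Re\mathbf F_{23}^{\mathsf T}&\Re\mathbf F_{33}&-\Im\mathbf F_{33}\\ -\Im\mathbf F_{13}^{\mathsf T}&-\Im\mathbf F_{23}^{\mathsf T}&-\Im\mathbf F_{33}^{\mathsf T}&\Re\mathbf F_{33}\end{bmatrix}$, with $\mathbf F_{11}=(\mathbf U\mathbf A^H\mathbf R_x\mathbf A\mathbf U^H)^{\mathsf T}\odot(\dot{\mathbf B}_\theta^H\dot{\mathbf B}_\theta)+(\mathbf U\mathbf A^H\mathbf R_x\dot{\mathbf A}_\theta\mathbf U^H)^{\mathsf T}\odot(\mathbf B^H\dot{\mathbf B}_\theta)+(\mathbf U\dot{\mathbf A}_\theta^H\mathbf R_x\mathbf A\mathbf U^H)^{\mathsf T}\odot(\dot{\mathbf B}_\theta^H\mathbf B)+(\mathbf U\dot{\mathbf A}_\theta^H\mathbf R_x\dot{\mathbf A}_\theta\mathbf U^H)^{\mathsf T}\odot(\mathbf B^H\mathbf B)$; $\mathbf F_{12}=(\mathbf U\mathbf A^H\mathbf R_x\mathbf A\mathbf U^H)^{\mathsf T}\odot(\dot{\mathbf B}_\theta^H\dot{\mathbf B}_\phi)+(\mathbf U\mathbf A^H\mathbf R_x\dot{\mathbf A}_\theta\mathbf U^H)^{\mathsf T}\odot(\mathbf B^H\dot{\mathbf B}_\phi)+(\mathbf U\dot{\mathbf A}_\phi^H\mathbf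 R_x\mathbf A\mathbf U^H)^{\mathsf T}\odot(\dot{\mathbf B}_\theta^H\mathbf B)+(\mathbf U\dot{\mathbf A}_\phi^H\mathbf R_x\dot{\mathbf A}_\theta\mathbf U^H)^{\mathsf T}\odot(\mathbf B^H\mathbf B)$; $\mathbf F_{22}$ = $\mathbf F_{11}$ with $\theta$ replaced by $\phi$; $\mathbf F_{13}=(\mathbf A^H\mathbf R_x\mathbf A\mathbf U^H)^{\mathsf T}\odot(\dot{\mathbf B}_\theta^H\mathbf B)+(\mathbf A^H\mathbf R_x\dot{\mathbf A}_\theta\mathbf U^H)^{\mathsf T}\odot(\mathbf B^H\mathbf B)$; $\mathbf F_{23}$ = $\mathbf F_{13}$ with $\theta$ replaced by $\phi$; $\mathbf F_{33}=(\mathbf A^H\mathbf R_x\mathbf A)^{\mathsf T}\odot(\mathbf B^H\mathbf B)$. Communications quantities at $\mathbf W$: $I_k=\sum_{j\ne k}|\mathbf h_k^H\mathbf w_{cj}|^2+\|\mathbf h_k^H\mathbf W_s\|_F^2+\sigma_{ck}^2$, $T_k=I_k+|\mathbf h_k^H\mathbf w_{ck}|^2$, $\xi_k=|\mathbf h_k^H\mathbf w_{ck}|^2/I_k$, $\eta_k=\overline{\mathbf h_k^H\mathbf w_{ck}}/I_k$ (which equals $\xi_k/(\mathbf h_k^H\mathbf w_{ck})$ when the latter is defined), $\beta_k=\xi_k/T_k$, $\bm\Sigma_1=\mathrm{diag}(\eta_1,\dots,\eta_K)$, $\bm\Sigma_2=\mathrm{diag}(\beta_1,\dots,\beta_K)$.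 Sensing quantity at $\mathbf W$ (with $\mathbf F(\mathbf W)$ invertible): $\bm\Phi=\mathbf F(\mathbf W)^{-2}$ (real symmetric), partitioned into $M\times M$ blocks $\bm\Phi_{pq}$, $p,q\in\{1,2,3,4\}$; with $\mathrm j$ the imaginary unit, $\mathbf Q_{11}=\mathbf A\mathbf U^H(\bm\Phi_{11}\odot\dot{\mathbf B}_\theta^H\dot{\mathbf B}_\theta)\mathbf U\mathbf A^H+\dot{\mathbf A}_\theta\mathbf U^H(\bm\Phi_{11}\odot\mathbf B^H\dot{\mathbf B}_\theta)\mathbf U\mathbf A^H+\mathbf A\mathbf U^H(\bm\Phi_{11}\odot\dot{\mathbf B}_\theta^H\mathbf B)\mathbf U\dot{\mathbf A}_\theta^H+\dot{\mathbf A}_\theta\mathbf U^H(\bm\Phi_{11}\odot\mathbf B^H\mathbf B)\mathbf U\dot{\mathbf A}_\theta^H$; $\mathbf Q_{12}=2[\mathbf A\mathbf U^H(\bm\Phi_{12}\odot\dot{\mathbf B}_\theta^H\dot{\mathbf B}_\phi)\mathbf U\mathbf A^H+\dot{\mathbf A}_\theta\mathbf U^H(\bm\Phi_{12}\odot\mathbf B^H\dot{\mathbf B}_\phi)\mathbf U\mathbf A^H+\mathbf A\mathbf U^H(\bm\Phi_{12}\odot\dot{\mathbf B}_\theta^H\mathbf B)\mathbf U\dot{\mathbf A}_\phi^H+\dot{\mathbf A}_\theta\mathbf U^H(\bm\Phi_{12}\odot\mathbf B^H\mathbf B)\mathbf U\dot{\mathbf A}_\phi^H]$; $\mathbf Q_{22}$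 = $\mathbf Q_{11}$ with $\bm\Phi_{11}$ replaced by $\bm\Phi_{22}$ and $\theta$ by $\phi$; $\mathbf Q_{13}=\mathbf A\mathbf U^H((2\bm\Phi_{13}+2\mathrm j\bm\Phi_{14})\odot\dot{\mathbf B}_\theta^H\mathbf B)\mathbf A^H+\dot{\mathbf A}_\theta\mathbf U^H((2\bm\Phi_{13}+2\mathrm j\bm\Phi_{14})\odot\mathbf B^H\mathbf B)\mathbf A^H$; $\mathbf Q_{23}=\mathbf A\mathbf U^H((2\bm\Phi_{23}+2\mathrm j\bm\Phi_{24})\odot\dot{\mathbf B}_\phi^H\mathbf B)\mathbf A^H+\dot{\mathbf A}_\phi\mathbf U^H((2\bm\Phi_{23}+2\mathrm j\bm\Phi_{24})\odot\mathbf B^H\mathbf B)\mathbf A^H$; $\mathbf Q_{33}=\mathbf A((\bm\Phi_{33}+\bm\Phi_{44}+2\mathrm j\bm\Phi_{34})\odot\mathbf B^H\mathbf B)\mathbf A^H$; $\mathbf Q=\frac{2L}{\sigma_s^2}(\mathbf Q_{11}+\mathbf Q_{12}+\mathbf Q_{13}+\mathbf Q_{22}+\mathbf Q_{23}+\mathbf Q_{33})$. *)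

theory Defs
  imports "HOL-Analysis.Analysis" "Jordan_Normal_Form.Matrix"
begin

definition ctrans :: "complex mat \<Rightarrow> complex mat" where
  "ctrans A = mat (dim_col A) (dim_row A) (\<lambda>(i,j). cnj (A $$ (j,i)))"

definition mtrace :: "'a::comm_monoid_add mat \<Rightarrow> 'a" where
  "mtrace A = (\<Sum>i<dim_row A. A $$ (i,i))"

definition hadamard :: "'a::times mat \<Rightarrow> 'a mat \<Rightarrow> 'a mat" where
  "hadamard A B = mat (dim_row A) (dim_col A) (\<lambda>(i,j). A $$ (i,j) * B $$ (i,j))"

definition ReM :: "complex mat \<Rightarrow> real mat" where "ReM A = map_mat Re A"
definition ImM :: "complex mat \<Rightarrow> real mat" where "ImM A = map_mat Im A"
definition cplxM :: "real mat \<Rightarrow> complex mat" where "cplxM A = map_mat complex_of_real A"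

definition diagc :: "nat \<Rightarrow> (nat \<Rightarrow> 'a::zero) \<Rightarrow> 'a mat" where
  "diagc n f = mat n n (\<lambda>(i,j). if i = j then f i else 0)"

definition mat_inv :: "'a::semiring_1 mat \<Rightarrow> 'a mat" where
  "mat_inv A = (SOME B. inverts_mat A B \<and> inverts_mat B A)"

definition block4 :: "nat \<Rightarrow> (nat \<Rightarrow> nat \<Rightarrow> 'a mat) \<Rightarrow> 'a mat" where
  "block4 M blk = mat (4*M) (4*M) (\<lambda>(i,j). blk (i div M) (j div M) $$ (i mod M, j mod M))"

definition subblock :: "nat \<Rightarrow> 'a mat \<Rightarrow> nat \<Rightarrow> nat \<Rightarrow> 'a mat" where
  "subblock M P p q = mat M M (\<lambda>(i,j). P $$ (p*M + i, q*M + j))"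

text \<open>a : R^2 -> C^N represented as a (theta,phi) i = i-th component (i < N).\<close>
definition steer :: "nat \<Rightarrow> nat \<Rightarrow> (real \<times> real \<Rightarrow> nat \<Rightarrow> complex) \<Rightarrow> (nat \<Rightarrow> real) \<Rightarrow> (nat \<Rightarrow> real) \<Rightarrow> complex mat" where
  "steer N M a \<theta> \<phi> = mat N M (\<lambda>(i,m). a (\<theta> m, \<phi> m) i)"

definition dsteer_theta :: "nat \<Rightarrow> nat \<Rightarrow> (real \<times> real \<Rightarrow> nat \<Rightarrow> complex) \<Rightarrow> (nat \<Rightarrow> real) \<Rightarrow> (nat \<Rightarrow> real) \<Rightarrow> complex mat" where
  "dsteer_theta N M a \<theta> \<phi> = mat N M (\<lambda>(i,m). vector_derivative (\<lambda>x. a (x, \<phi> m) i) (at (\<theta> m)))"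

definition dsteer_phi :: "nat \<Rightarrow> nat \<Rightarrow> (real \<times> real \<Rightarrow> nat \<Rightarrow> complex) \<Rightarrow> (nat \<Rightarrow> real) \<Rightarrow> (nat \<Rightarrow> real) \<Rightarrow> complex mat" where
  "dsteer_phi N M a \<theta> \<phi> = mat N M (\<lambda>(i,m). vector_derivative (\<lambda>y. a (\<theta> m, y) i) (at (\<phi> m)))"

text \<open>Blocks of the FIM. Arguments: A, B, Adot_theta (At), Adot_phi (Ap), Bdot_theta (Bt), Bdot_phi (Bp), U, Rx.
  F22 = F11 A B Ap Bp U Rx, F23 = F13 A B Ap Bp U Rx.\<close>
definition F11 :: "complex mat \<Rightarrow> complex mat \<Rightarrow> complex mat \<Rightarrow> complex mat \<Rightarrow> complex mat \<Rightarrow> complex mat \<Rightarrow> complex mat" where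
  "F11 A B At Bt U Rx =
     hadamard (transpose_mat (U * ctrans A * Rx * A * ctrans U)) (ctrans Bt * Bt)
   + hadamard (transpose_mat (U * ctrans A * Rx * At * ctrans U)) (ctrans B * Bt)
   + hadamard (transpose_mat (U * ctrans At * Rx * A * ctrans U)) (ctrans Bt * B)
   + hadamard (transpose_mat (U * ctrans At * Rx * At * ctrans U)) (ctrans B * B)"

definition F12 :: "complex mat \<Rightarrow> complex mat \<Rightarrow> complex mat \<Rightarrow> complex mat \<Rightarrow> complex mat \<Rightarrow> complex mat \<Rightarrow> complex mat \<Rightarrow> complex mat \<Rightarrow> complex mat" where
  "F12 A B At Ap Bt Bp U Rx =
     hadamard (transpose_mat (U * ctrans A * Rx * A * ctrans U)) (ctrans Bt * Bp)
   + hadamard (transpose_mat (U * ctrans A * Rx * At * ctrans U)) (ctrans B * Bp)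
   + hadamard (transpose_mat (U * ctrans Ap * Rx * A * ctrans U)) (ctrans Bt * B)
   + hadamard (transpose_mat (U * ctrans Ap * Rx * At * ctrans U)) (ctrans B * B)"

definition F13 :: "complex mat \<Rightarrow> complex mat \<Rightarrow> complex mat \<Rightarrow> complex mat \<Rightarrow> complex mat \<Rightarrow> complex mat \<Rightarrow> complex mat" where
  "F13 A B At Bt U Rx =
     hadamard (transpose_mat (ctrans A * Rx * A * ctrans U)) (ctrans Bt * B)
   + hadamard (transpose_mat (ctrans A * Rx * At * ctrans U)) (ctrans B * B)"

definition F33 :: "complex mat \<Rightarrow> complex mat \<Rightarrow> complex mat \<Rightarrow> complex mat" where
  "F33 A B Rx = hadamard (transpose_mat (ctrans A * Rx * A)) (ctrans B * B)"

text \<open>The FIM F(W) (as a function of Rx = W W^H), size 4M x 4M, M = dim_col A.\<close>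
definition FIM :: "nat \<Rightarrow> real \<Rightarrow> complex mat \<Rightarrow> complex mat \<Rightarrow> complex mat \<Rightarrow> complex mat \<Rightarrow> complex mat \<Rightarrow> complex mat \<Rightarrow> complex mat \<Rightarrow> complex mat \<Rightarrow> real mat" where
  "FIM L \<sigma>s A B At Ap Bt Bp U Rx =
    (let f11 = F11 A B At Bt U Rx; f12 = F12 A B At Ap Bt Bp U Rx; f22 = F11 A B Ap Bp U Rx;
         f13 = F13 A B At Bt U Rx; f23 = F13 A B Ap Bp U Rx; f33 = F33 A B Rx;
         blk = (\<lambda>p q.
           if p = 0 then (if q = 0 then ReM f11 else if q = 1 then ReM f12 else if q = 2 then ReM f13 else - ImM f13)
           else if p = 1 then (if q = 0 then transpose_mat (ReM f12) else if q = 1 then ReM f22 else if q = 2 then ReM f23 else - ImM f23)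
           else if p = 2 then (if q = 0 then transpose_mat (ReM f13) else if q = 1 then transpose_mat (ReM f23) else if q = 2 then ReM f33 else - ImM f33)
           else (if q = 0 then - transpose_mat (ImM f13) else if q = 1 then - transpose_mat (ImM f23) else if q = 2 then - transpose_mat (ImM f33) else ReM f33))
     in (2 * real L / \<sigma>s\<^sup>2) \<cdot>\<^sub>m block4 (dim_col A) blk)"

text \<open>The matrix Q built from Phi (real 4M x 4M). Block indices are 0-based: Phi_pq of the paper is
  subblock M Phi (p-1) (q-1).\<close>
definition Qblk11 :: "real mat \<Rightarrow> complex mat \<Rightarrow> complex mat \<Rightarrow> complex mat \<Rightarrow> complex mat \<Rightarrow> complex mat \<Rightarrow> complex mat" where
  "Qblk11 P A B At Bt U =
     A * ctrans U * hadamard (cplxM P) (ctrans Bt * Bt) * U * ctrans A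
   + At * ctrans U * hadamard (cplxM P) (ctrans B * Bt) * U * ctrans A
   + A * ctrans U * hadamard (cplxM P) (ctrans Bt * B) * U * ctrans At
   + At * ctrans U * hadamard (cplxM P) (ctrans B * B) * U * ctrans At"

definition Qblk12 :: "real mat \<Rightarrow> complex mat \<Rightarrow> complex mat \<Rightarrow> complex mat \<Rightarrow> complex mat \<Rightarrow> complex mat \<Rightarrow> complex mat \<Rightarrow> complex mat \<Rightarrow> complex mat" where
  "Qblk12 P A B At Ap Bt Bp U = 2 \<cdot>\<^sub>m (
     A * ctrans U * hadamard (cplxM P) (ctrans Bt * Bp) * U * ctrans A
   + At * ctrans U * hadamard (cplxM P) (ctrans B * Bp) * U * ctrans A
   + A * ctrans U * hadamard (cplxM P) (ctrans Bt * B) * U * ctrans Ap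
   + At * ctrans U * hadamard (cplxM P) (ctrans B * B) * U * ctrans Ap)"

text \<open>Q13 / Q23: P is Phi_13 (resp. Phi_23), P' is Phi_14 (resp. Phi_24).\<close>
definition Qblk13 :: "real mat \<Rightarrow> real mat \<Rightarrow> complex mat \<Rightarrow> complex mat \<Rightarrow> complex mat \<Rightarrow> complex mat \<Rightarrow> complex mat \<Rightarrow> complex mat" where
  "Qblk13 P P' A B At Bt U =
    (let C = 2 \<cdot>\<^sub>m cplxM P + (2 * \<i>) \<cdot>\<^sub>m cplxM P' in
       A * ctrans U * hadamard C (ctrans Bt * B) * ctrans A
     + At * ctrans U * hadamard C (ctrans B * B) * ctrans A)"

definition Qblk33 :: "real mat \<Rightarrow> real mat \<Rightarrow> real mat \<Rightarrow> complex mat \<Rightarrow> complex mat \<Rightarrow> complex mat" where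
  "Qblk33 P33 P44 P34 A B =
     A * hadamard (cplxM P33 + cplxM P44 + (2 * \<i>) \<cdot>\<^sub>m cplxM P34) (ctrans B * B) * ctrans A"

definition Qmat :: "nat \<Rightarrow> real \<Rightarrow> real mat \<Rightarrow> complex mat \<Rightarrow> complex mat \<Rightarrow> complex mat \<Rightarrow> complex mat \<Rightarrow> complex mat \<Rightarrow> complex mat \<Rightarrow> complex mat \<Rightarrow> complex mat" where
  "Qmat L \<sigma>s Phi A B At Ap Bt Bp U =
    (let M = dim_col A; P = subblock M Phi in
     complex_of_real (2 * real L / \<sigma>s\<^sup>2) \<cdot>\<^sub>m
      (Qblk11 (P 0 0) A B At Bt U + Qblk12 (P 0 1) A B At Ap Bt Bp U + Qblk13 (P 0 2) (P 0 3) A B At Bt U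
     + Qblk11 (P 1 1) A B Ap Bp U + Qblk13 (P 1 2) (P 1 3) A B Ap Bp U + Qblk33 (P 2 2) (P 3 3) (P 2 3) A B))"

text \<open>hw H W k j = h_k^H w_j, where h_k = k-th column of H, w_j = j-th column of W.
  Columns 0..K-1 of W form W_c, columns K..K+Ns-1 form W_s.\<close>
definition hw :: "complex mat \<Rightarrow> complex mat \<Rightarrow> nat \<Rightarrow> nat \<Rightarrow> complex" where
  "hw H W k j = (ctrans H * W) $$ (k, j)"

definition Icomm :: "nat \<Rightarrow> nat \<Rightarrow> complex mat \<Rightarrow> (nat \<Rightarrow> real) \<Rightarrow> complex mat \<Rightarrow> nat \<Rightarrow> real" where
  "Icomm K Ns H \<sigma>c W k = (\<Sum>j\<in>{..<K} - {k}. (cmod (hw H W k j))\<^sup>2)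
      + (\<Sum>j\<in>{K..<K+Ns}. (cmod (hw H W k j))\<^sup>2) + (\<sigma>c k)\<^sup>2"

definition Tcomm :: "nat \<Rightarrow> nat \<Rightarrow> complex mat \<Rightarrow> (nat \<Rightarrow> real) \<Rightarrow> complex mat \<Rightarrow> nat \<Rightarrow> real" where
  "Tcomm K Ns H \<sigma>c W k = Icomm K Ns H \<sigma>c W k + (cmod (hw H W k k))\<^sup>2"

definition xi :: "nat \<Rightarrow> nat \<Rightarrow> complex mat \<Rightarrow> (nat \<Rightarrow> real) \<Rightarrow> complex mat \<Rightarrow> nat \<Rightarrow> real" where
  "xi K Ns H \<sigma>c W k = (cmod (hw H W k k))\<^sup>2 / Icomm K Ns H \<sigma>c W k"

definition eta :: "nat \<Rightarrow> nat \<Rightarrow> complex mat \<Rightarrow> (nat \<Rightarrow> real) \<Rightarrow> complex mat \<Rightarrow> nat \<Rightarrow> complex" where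
  "eta K Ns H \<sigma>c W k = cnj (hw H W k k) / complex_of_real (Icomm K Ns H \<sigma>c W k)"

definition beta :: "nat \<Rightarrow> nat \<Rightarrow> complex mat \<Rightarrow> (nat \<Rightarrow> real) \<Rightarrow> complex mat \<Rightarrow> nat \<Rightarrow> real" where
  "beta K Ns H \<sigma>c W k = xi K Ns H \<sigma>c W k / Tcomm K Ns H \<sigma>c W k"

definition rsur :: "nat \<Rightarrow> nat \<Rightarrow> complex mat \<Rightarrow> (nat \<Rightarrow> real) \<Rightarrow> complex mat \<Rightarrow> complex mat \<Rightarrow> nat \<Rightarrow> real" where
  "rsur K Ns H \<sigma>c Wt W k =
     ln (1 + xi K Ns H \<sigma>c Wt k) + 2 * Re (hw H W k k * eta K Ns H \<sigma>c Wt k) - xi K Ns H \<sigma>c Wt k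
     - beta K Ns H \<sigma>c Wt k * ((\<Sum>j<K. (cmod (hw H W k j))\<^sup>2) + (\<Sum>j\<in>{K..<K+Ns}. (cmod (hw H W k j))\<^sup>2) + (\<sigma>c k)\<^sup>2)"

definition Wcomm :: "nat \<Rightarrow> complex mat \<Rightarrow> complex mat" where
  "Wcomm K W = mat (dim_row W) K (\<lambda>(i,j). W $$ (i,j))"


definition sensFIM :: "nat \<Rightarrow> nat \<Rightarrow> nat \<Rightarrow> nat \<Rightarrow> real \<Rightarrow> (real \<times> real \<Rightarrow> nat \<Rightarrow> complex) \<Rightarrow> (real \<times> real \<Rightarrow> nat \<Rightarrow> complex) \<Rightarrow> (nat \<Rightarrow> real) \<Rightarrow> (nat \<Rightarrow> real) \<Rightarrow> (nat \<Rightarrow> complex) \<Rightarrow> complex mat \<Rightarrow> real mat" where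
  "sensFIM Nt Nr M L \<sigma>s a b \<theta> \<phi> \<alpha> Rx =
     FIM L \<sigma>s (steer Nt M a \<theta> \<phi>) (steer Nr M b \<theta> \<phi>) (dsteer_theta Nt M a \<theta> \<phi>) (dsteer_phi Nt M a \<theta> \<phi>)
       (dsteer_theta Nr M b \<theta> \<phi>) (dsteer_phi Nr M b \<theta> \<phi>) (diagc M \<alpha>) Rx"

definition sensQ :: "nat \<Rightarrow> nat \<Rightarrow> nat \<Rightarrow> nat \<Rightarrow> real \<Rightarrow> (real \<times> real \<Rightarrow> nat \<Rightarrow> complex) \<Rightarrow> (real \<times> real \<Rightarrow> nat \<Rightarrow> complex) \<Rightarrow> (nat \<Rightarrow> real) \<Rightarrow> (nat \<Rightarrow> real) \<Rightarrow> (nat \<Rightarrow> complex) \<Rightarrow> real mat \<Rightarrow> complex mat" where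
  "sensQ Nt Nr M L \<sigma>s a b \<theta> \<phi> \<alpha> Phi =
     Qmat L \<sigma>s Phi (steer Nt M a \<theta> \<phi>) (steer Nr M b \<theta> \<phi>) (dsteer_theta Nt M a \<theta> \<phi>) (dsteer_phi Nt M a \<theta> \<phi>)
       (dsteer_theta Nr M b \<theta> \<phi>) (dsteer_phi Nr M b \<theta> \<phi>) (diagc M \<alpha>)"

end

theory Submission imports Defs begin

lemma mult_entry:
  assumes "A \<in> carrier_mat n m" "B \<in> carrier_mat m p" "i < n" "j < p"
  shows "(A * B) $$ (i,j) = (\<Sum>k<m. A $$ (i,k) * B $$ (k,j))"
  using assms by (simp add: scalar_prod_def atLeast0LessThan)

lemma mtrace_comm:
  fixes A B :: "'a::comm_ring_1 mat"
  assumes "A \<in> carrier_mat n m" "B \<in> carrier_mat m n"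
  shows "mtrace (A * B) = mtrace (B * A)"
proof -
  have "mtrace (A * B) = (\<Sum>i<n. \<Sum>k<m. A $$ (i,k) * B $$ (k,i))"
    unfolding mtrace_def using assms by (intro sum.cong refl mult_entry[OF assms]) auto
  also have "\<dots> = (\<Sum>k<m. \<Sum>i<n. B $$ (k,i) * A $$ (i,k))"
    by (subst sum.swap) (simp add: mult.commute)
  also have "\<dots> = mtrace (B * A)"
    unfolding mtrace_def using assms by (intro sum.cong refl mult_entry[OF assms(2,1), symmetric]) auto
  finally show ?thesis .
qed

lemma mtrace_add:
  assumes "A \<in> carrier_mat n n" "B \<in> carrier_mat n n"
  shows "mtrace (A + B) = mtrace A + mtrace B"
  using assms unfolding mtrace_def by (simp add: sum.distrib)

lemma mtrace_smult:
  fixes A :: "'a::comm_ring_1 mat"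
  assumes "A \<in> carrier_mat n n"
  shows "mtrace (c \<cdot>\<^sub>m A) = c * mtrace A"
  using assms unfolding mtrace_def
  by (auto simp: sum_distrib_left intro!: sum.cong)

lemma ctrans_carrier[simp]: "ctrans A \<in> carrier_mat (dim_col A) (dim_row A)"
  unfolding ctrans_def by auto

lemma ctrans_dim[simp]: "dim_row (ctrans A) = dim_col A" "dim_col (ctrans A) = dim_row A"
  unfolding ctrans_def by auto

lemma ctrans_carrier'[simp]: "A \<in> carrier_mat n m \<Longrightarrow> ctrans A \<in> carrier_mat m n"
  by auto

lemma ctrans_index[simp]: "i < dim_col A \<Longrightarrow> j < dim_row A \<Longrightarrow> ctrans A $$ (i,j) = cnj (A $$ (j,i))"
  unfolding ctrans_def by auto

lemma ctrans_ctrans[simp]: "ctrans (ctrans A) = A"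
  by (rule eq_matI) auto

lemma ctrans_mult:
  assumes "A \<in> carrier_mat n m" "B \<in> carrier_mat m p"
  shows "ctrans (A * B) = ctrans B * ctrans A"
proof (rule eq_matI)
  fix i j assume ij: "i < dim_row (ctrans B * ctrans A)" "j < dim_col (ctrans B * ctrans A)"
  hence i: "i < p" and j: "j < n" using assms by auto
  have "ctrans (A * B) $$ (i,j) = cnj ((A * B) $$ (j,i))"
    using assms i j by simp
  also have "\<dots> = cnj (\<Sum>k<m. A $$ (j,k) * B $$ (k,i))"
    by (simp only: mult_entry[OF assms j i])
  also have "\<dots> = (\<Sum>k<m. ctrans B $$ (i,k) * ctrans A $$ (k,j))"
    using assms i j by (simp add: mult.commute)
  also have "\<dots> = (ctrans B * ctrans A) $$ (i,j)"
    using assms i j by (subst mult_entry[of _ p m _ n]) auto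
  finally show "ctrans (A * B) $$ (i,j) = (ctrans B * ctrans A) $$ (i,j)" .
qed (use assms in auto)

lemma hadamard_carrier[simp]: "A \<in> carrier_mat n m \<Longrightarrow> hadamard A B \<in> carrier_mat n m"
  unfolding hadamard_def by auto

lemma hadamard_dim[simp]: "dim_row (hadamard A B) = dim_row A" "dim_col (hadamard A B) = dim_col A"
  unfolding hadamard_def by auto

lemma hadamard_index[simp]: "i < dim_row A \<Longrightarrow> j < dim_col A \<Longrightarrow> hadamard A B $$ (i,j) = A $$ (i,j) * B $$ (i,j)"
  unfolding hadamard_def by auto


lemma assoc_dim: "dim_col A = dim_row B \<Longrightarrow> dim_col B = dim_row C \<Longrightarrow> (A * B) * C = A * (B * (C :: 'a :: semiring_0 mat))"
  by (rule assoc_mult_mat[of A "dim_row A" "dim_col A" B "dim_col B" C "dim_col C"]) auto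

definition froC :: "nat \<Rightarrow> complex mat \<Rightarrow> complex mat \<Rightarrow> complex" where
  "froC M C F = (\<Sum>i<M. \<Sum>j<M. C $$ (i,j) * F $$ (i,j))"

lemma mtrace_had:
  assumes "X \<in> carrier_mat M M" "C \<in> carrier_mat M M" "Y \<in> carrier_mat M M"
  shows "mtrace (X * hadamard C Y) = froC M C (hadamard (transpose_mat X) Y)"
proof -
  have "mtrace (X * hadamard C Y) = (\<Sum>i<M. \<Sum>k<M. X $$ (i,k) * (C $$ (k,i) * Y $$ (k,i)))"
    unfolding mtrace_def using assms
    by (simp only: index_mult_mat(2) carrier_matD, intro sum.cong refl, subst mult_entry[of _ M M _ M]) auto
  also have "\<dots> = (\<Sum>k<M. \<Sum>i<M. C $$ (k,i) * (X $$ (i,k) * Y $$ (k,i)))"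
    by (subst sum.swap) (simp add: algebra_simps)
  also have "\<dots> = froC M C (hadamard (transpose_mat X) Y)"
    unfolding froC_def using assms by (intro sum.cong refl) auto
  finally show ?thesis .
qed

lemma tr_core:
  fixes R P S Hm :: "complex mat"
  assumes R: "R \<in> carrier_mat n n" and P: "P \<in> carrier_mat n M" and S: "S \<in> carrier_mat M n"
    and Hm: "Hm \<in> carrier_mat M M"
  shows "mtrace (R * (P * Hm * S)) = mtrace ((S * R * P) * Hm)"
proof -
  have "R * (P * Hm * S) = (R * P * Hm) * S" using assms by (simp add: assoc_dim)
  hence "mtrace (R * (P * Hm * S)) = mtrace ((R * P * Hm) * S)" by simp
  also have "\<dots> = mtrace (S * (R * P * Hm))"
    by (rule mtrace_comm[of "R * P * Hm" n M S]) (use assms in auto)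
  also have "S * (R * P * Hm) = (S * R * P) * Hm" using assms by (simp add: assoc_dim)
  finally show ?thesis .
qed

lemma tr_Q5:
  assumes R: "R \<in> carrier_mat n n" and X1: "X1 \<in> carrier_mat n M" and X2: "X2 \<in> carrier_mat n M"
    and D: "D \<in> carrier_mat M M" and E: "E \<in> carrier_mat M M"
    and C: "C \<in> carrier_mat M M" and Y: "Y \<in> carrier_mat M M"
  shows "mtrace (R * (X1 * D * hadamard C Y * E * ctrans X2))
       = froC M C (hadamard (transpose_mat (E * ctrans X2 * R * X1 * D)) Y)"
proof -
  have "X1 * D * hadamard C Y * E * ctrans X2 = (X1 * D) * hadamard C Y * (E * ctrans X2)"
    using assms by (simp add: assoc_dim)
  hence "mtrace (R * (X1 * D * hadamard C Y * E * ctrans X2))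
     = mtrace ((E * ctrans X2) * R * (X1 * D) * hadamard C Y)"
    using assms by (simp add: tr_core[of R n "X1 * D" M "E * ctrans X2"])
  also have "(E * ctrans X2) * R * (X1 * D) = E * ctrans X2 * R * X1 * D" using assms by (simp add: assoc_dim)
  also have "mtrace (E * ctrans X2 * R * X1 * D * hadamard C Y) = froC M C (hadamard (transpose_mat (E * ctrans X2 * R * X1 * D)) Y)"
    by (rule mtrace_had) (use assms in auto)
  finally show ?thesis .
qed

lemma tr_Q4:
  assumes R: "R \<in> carrier_mat n n" and X1: "X1 \<in> carrier_mat n M" and X2: "X2 \<in> carrier_mat n M"
    and D: "D \<in> carrier_mat M M"
    and C: "C \<in> carrier_mat M M" and Y: "Y \<in> carrier_mat M M"
  shows "mtrace (R * (X1 * D * hadamard C Y * ctrans X2))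
       = froC M C (hadamard (transpose_mat (ctrans X2 * R * X1 * D)) Y)"
proof -
  have "mtrace (R * (X1 * D * hadamard C Y * ctrans X2))
     = mtrace (ctrans X2 * R * (X1 * D) * hadamard C Y)"
    using assms by (simp add: tr_core[of R n "X1 * D" M "ctrans X2"])
  also have "ctrans X2 * R * (X1 * D) = ctrans X2 * R * X1 * D" using assms by (simp add: assoc_dim)
  also have "mtrace (ctrans X2 * R * X1 * D * hadamard C Y) = froC M C (hadamard (transpose_mat (ctrans X2 * R * X1 * D)) Y)"
    by (rule mtrace_had) (use assms in auto)
  finally show ?thesis .
qed

lemma tr_Q3:
  assumes R: "R \<in> carrier_mat n n" and X1: "X1 \<in> carrier_mat n M" and X2: "X2 \<in> carrier_mat n M"
    and C: "C \<in> carrier_mat M M" and Y: "Y \<in> carrier_mat M M"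
  shows "mtrace (R * (X1 * hadamard C Y * ctrans X2))
       = froC M C (hadamard (transpose_mat (ctrans X2 * R * X1)) Y)"
proof -
  have "mtrace (R * (X1 * hadamard C Y * ctrans X2))
     = mtrace (ctrans X2 * R * X1 * hadamard C Y)"
    using assms by (simp add: tr_core[of R n "X1" M "ctrans X2"])
  also have "mtrace (ctrans X2 * R * X1 * hadamard C Y) = froC M C (hadamard (transpose_mat (ctrans X2 * R * X1)) Y)"
    by (rule mtrace_had) (use assms in auto)
  finally show ?thesis .
qed


lemma sum_blocks: fixes k M :: nat shows "(\<Sum>i<k*M. f i) = (\<Sum>p<k. \<Sum>a<M. f (p*M + a))"
proof (induction k)
  case 0 then show ?case by simp
next
  case (Suc k)
  have "{..<Suc k * M} = {..<k*M} \<union> {k*M..<k*M+M}" by auto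
  hence "(\<Sum>i<Suc k*M. f i) = (\<Sum>i<k*M. f i) + (\<Sum>i\<in>{k*M..<k*M+M}. f i)"
    by (simp add: sum.union_disjoint ivl_disj_int)
  also have "(\<Sum>i\<in>{k*M..<k*M+M}. f i) = (\<Sum>a<M. f (k*M + a))"
  proof -
    have "{k*M..<k*M+M} = {0 + k*M..<M + k*M}" by (simp add: add.commute)
    hence "(\<Sum>i\<in>{k*M..<k*M+M}. f i) = (\<Sum>i\<in>{0..<M}. f (i + k*M))"
      by (simp only: sum.shift_bounds_nat_ivl)
    thus ?thesis by (simp add: atLeast0LessThan add.commute)
  qed
  finally show ?case using Suc by simp
qed

definition rfro :: "nat \<Rightarrow> real mat \<Rightarrow> real mat \<Rightarrow> real" where
  "rfro M X Y = (\<Sum>a<M. \<Sum>b<M. X $$ (a,b) * Y $$ (a,b))"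

lemma divmod_blk: fixes a M p :: nat shows "a < M \<Longrightarrow> (p*M + a) div M = p" "a < M \<Longrightarrow> (p*M + a) mod M = a"
  by (simp_all add: add.commute[of "p*M"])

lemma mtrace_block4:
  fixes Phi :: "real mat"
  assumes M: "0 < M" and Phi: "Phi \<in> carrier_mat (4*M) (4*M)"
    and sym: "\<And>i j. i < 4*M \<Longrightarrow> j < 4*M \<Longrightarrow> Phi $$ (i,j) = Phi $$ (j,i)"
  shows "mtrace ((c \<cdot>\<^sub>m block4 M blk) * Phi)
       = c * (\<Sum>p<4. \<Sum>q<4. rfro M (blk p q) (subblock M Phi p q))"
proof -
  let ?B = "block4 M blk"
  have B: "?B \<in> carrier_mat (4*M) (4*M)" unfolding block4_def by auto
  have "mtrace ((c \<cdot>\<^sub>m ?B) * Phi) = (\<Sum>i<4*M. \<Sum>k<4*M. (c * ?B $$ (i,k)) * Phi $$ (k,i))"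
    unfolding mtrace_def using B Phi
    by (simp only: index_mult_mat(2) index_smult_mat(2) carrier_matD, intro sum.cong refl, subst mult_entry[of _ "4*M" "4*M" _ "4*M"]) auto
  also have "\<dots> = (\<Sum>p<4. \<Sum>a<M. \<Sum>q<4. \<Sum>b<M. c * (blk p q $$ (a,b) * subblock M Phi p q $$ (a,b)))"
  proof -
    have e: "(c * ?B $$ (p*M+a, q*M+b)) * Phi $$ (q*M+b, p*M+a) = c * (blk p q $$ (a,b) * subblock M Phi p q $$ (a,b))"
      if "p < 4" "q < 4" "a < M" "b < M" for p q a b
    proof -
      have "p*M \<le> 3*M" "q*M \<le> 3*M" using that by simp_all
      hence i1: "p*M + a < 4*M" "q*M+b < 4*M" using that by linarith+
      show ?thesis using that i1 sym[OF i1(2) i1(1)]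
        unfolding block4_def subblock_def by (simp add: divmod_blk)
    qed
    show ?thesis
      unfolding sum_blocks[where k=4 and M=M] by (intro sum.cong refl) (simp add: e)
  qed
  also have "\<dots> = c * (\<Sum>p<4. \<Sum>q<4. rfro M (blk p q) (subblock M Phi p q))"
    unfolding rfro_def sum_distrib_left
    by (rule sum.cong[OF refl], rule sum.swap)
  finally show ?thesis .
qed


lemma mtrace_R_add:
  fixes R X Y :: "complex mat"
  assumes "R \<in> carrier_mat n n" "dim_row X = n" "dim_col X = n" "dim_row Y = n" "dim_col Y = n"
  shows "mtrace (R * (X + Y)) = mtrace (R * X) + mtrace (R * Y)"
proof -
  have X: "X \<in> carrier_mat n n" and Y: "Y \<in> carrier_mat n n" using assms by auto
  have "R * (X + Y) = R * X + R * Y" using assms(1) X Y by (rule mult_add_distrib_mat)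
  thus ?thesis using assms X Y by (simp add: mtrace_add[of _ n])
qed

lemma mtrace_R_smult:
  fixes R X :: "complex mat"
  assumes "R \<in> carrier_mat n n" "dim_row X = n" "dim_col X = n"
  shows "mtrace (R * (c \<cdot>\<^sub>m X)) = c * mtrace (R * X)"
proof -
  have X: "X \<in> carrier_mat n n" using assms by auto
  have "R * (c \<cdot>\<^sub>m X) = c \<cdot>\<^sub>m (R * X)" using assms(1) X by (rule mult_smult_distrib)
  thus ?thesis using assms X by (simp add: mtrace_smult[of _ n])
qed

lemma froC_addL: "C2 \<in> carrier_mat M M \<Longrightarrow> froC M (C1 + C2) F = froC M C1 F + froC M C2 F"
  unfolding froC_def by (auto simp: sum.distrib[symmetric] algebra_simps intro!: sum.cong)

lemma froC_addR: "F2 \<in> carrier_mat M M \<Longrightarrow> froC M C (F1 + F2) = froC M C F1 + froC M C F2"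
  unfolding froC_def by (auto simp: sum.distrib[symmetric] algebra_simps intro!: sum.cong)

lemma froC_smultL: "C \<in> carrier_mat M M \<Longrightarrow> froC M (c \<cdot>\<^sub>m C) F = c * froC M C F"
  unfolding froC_def by (auto simp: sum_distrib_left algebra_simps intro!: sum.cong)

lemma cplxM_carrier[simp]: "P \<in> carrier_mat n m \<Longrightarrow> cplxM P \<in> carrier_mat n m"
  unfolding cplxM_def by auto

lemma rfro_Re: "F \<in> carrier_mat M M \<Longrightarrow> P \<in> carrier_mat M M \<Longrightarrow> rfro M (ReM F) P = Re (froC M (cplxM P) F)"
  unfolding rfro_def froC_def ReM_def cplxM_def by (auto simp: Re_sum intro!: sum.cong)

lemma rfro_mIm: "F \<in> carrier_mat M M \<Longrightarrow> P \<in> carrier_mat M M \<Longrightarrow> rfro M (- ImM F) P = Re (\<i> * froC M (cplxM P) F)"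
  unfolding rfro_def froC_def ImM_def cplxM_def by (auto simp: Re_sum sum_distrib_left intro!: sum.cong)

lemma rfro_trans: assumes "X \<in> carrier_mat M M" "P \<in> carrier_mat M M"
  shows "rfro M (transpose_mat X) P = rfro M X (transpose_mat P)"
proof -
  have "rfro M (transpose_mat X) P = (\<Sum>a<M. \<Sum>b<M. X$$(b,a) * P$$(a,b))"
    unfolding rfro_def using assms by (auto intro!: sum.cong)
  also have "\<dots> = (\<Sum>b<M. \<Sum>a<M. X$$(b,a) * P$$(a,b))" by (rule sum.swap)
  also have "\<dots> = rfro M X (transpose_mat P)"
    unfolding rfro_def using assms by (auto intro!: sum.cong)
  finally show ?thesis .
qed

lemma rfro_mtrans: assumes "X \<in> carrier_mat M M" "P \<in> carrier_mat M M"
  shows "rfro M (- transpose_mat X) P = rfro M (- X) (transpose_mat P)"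
proof -
  have "rfro M (- transpose_mat X) P = (\<Sum>a<M. \<Sum>b<M. - X$$(b,a) * P$$(a,b))"
    unfolding rfro_def using assms by (auto intro!: sum.cong)
  also have "\<dots> = (\<Sum>b<M. \<Sum>a<M. - X$$(b,a) * P$$(a,b))" by (rule sum.swap)
  also have "\<dots> = rfro M (- X) (transpose_mat P)"
    unfolding rfro_def using assms by (auto intro!: sum.cong)
  finally show ?thesis .
qed

lemma subblock_carrier[simp]: "subblock M P p q \<in> carrier_mat M M"
  unfolding subblock_def by auto

lemma subblock_trans:
  assumes "Phi \<in> carrier_mat (4*M) (4*M)" "\<And>i j. i < 4*M \<Longrightarrow> j < 4*M \<Longrightarrow> Phi $$ (i,j) = Phi $$ (j,i)"
    "p < 4" "q < 4"
  shows "transpose_mat (subblock M Phi p q) = subblock M Phi q p"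
proof (rule eq_matI)
  fix i j assume "i < dim_row (subblock M Phi q p)" "j < dim_col (subblock M Phi q p)"
  hence ij: "i < M" "j < M" unfolding subblock_def by auto
  have "p*M \<le> 3*M" "q*M \<le> 3*M" using assms by simp_all
  hence "p*M + j < 4*M" "q*M+i < 4*M" using ij by linarith+
  thus "transpose_mat (subblock M Phi p q) $$ (i, j) = subblock M Phi q p $$ (i, j)"
    using ij assms(2) unfolding subblock_def by auto
qed (auto simp: subblock_def)

lemma F11_carrier:
  assumes "A \<in> carrier_mat n M" "At \<in> carrier_mat n M" "U \<in> carrier_mat M M" "R \<in> carrier_mat n n"
  shows "F11 A B At Bt U R \<in> carrier_mat M M"
  using assms unfolding F11_def by auto

lemma F12_carrier:
  assumes "A \<in> carrier_mat n M" "At \<in> carrier_mat n M" "Ap \<in> carrier_mat n M" "U \<in> carrier_mat M M" "R \<in> carrier_mat n n"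
  shows "F12 A B At Ap Bt Bp U R \<in> carrier_mat M M"
  using assms unfolding F12_def by auto

lemma F13_carrier:
  assumes "A \<in> carrier_mat n M" "At \<in> carrier_mat n M" "U \<in> carrier_mat M M" "R \<in> carrier_mat n n"
  shows "F13 A B At Bt U R \<in> carrier_mat M M"
  using assms unfolding F13_def by auto

lemma F33_carrier:
  assumes "A \<in> carrier_mat n M" "R \<in> carrier_mat n n"
  shows "F33 A B R \<in> carrier_mat M M"
  using assms unfolding F33_def by auto


lemma froC_addR': "dim_row F2 = M \<Longrightarrow> dim_col F2 = M \<Longrightarrow> froC M C (F1 + F2) = froC M C F1 + froC M C F2"
  by (rule froC_addR) auto

lemma ctrans_mult_carrier: "X \<in> carrier_mat nr M \<Longrightarrow> Y \<in> carrier_mat nr M \<Longrightarrow> ctrans X * Y \<in> carrier_mat M M"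
  by auto

lemma Qblk11_tr:
  assumes A: "A \<in> carrier_mat n M" and At: "At \<in> carrier_mat n M"
    and B: "B \<in> carrier_mat nr M" and Bt: "Bt \<in> carrier_mat nr M"
    and U: "U \<in> carrier_mat M M" and R: "R \<in> carrier_mat n n" and P: "P \<in> carrier_mat M M"
  shows "mtrace (R * Qblk11 P A B At Bt U) = froC M (cplxM P) (F11 A B At Bt U R)"
  unfolding Qblk11_def F11_def using assms
  by (simp del: assoc_mult_mat add: mtrace_R_add[of R n] tr_Q5[of R n _ M] froC_addR' ctrans_mult_carrier)

lemma Qblk12_tr:
  assumes A: "A \<in> carrier_mat n M" and At: "At \<in> carrier_mat n M" and Ap: "Ap \<in> carrier_mat n M"
    and B: "B \<in> carrier_mat nr M" and Bt: "Bt \<in> carrier_mat nr M" and Bp: "Bp \<in> carrier_mat nr M"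
    and U: "U \<in> carrier_mat M M" and R: "R \<in> carrier_mat n n" and P: "P \<in> carrier_mat M M"
  shows "mtrace (R * Qblk12 P A B At Ap Bt Bp U) = 2 * froC M (cplxM P) (F12 A B At Ap Bt Bp U R)"
  unfolding Qblk12_def F12_def using assms
  by (simp del: assoc_mult_mat add: mtrace_R_smult[of R n] mtrace_R_add[of R n] tr_Q5[of R n _ M] froC_addR' ctrans_mult_carrier)

lemma Qblk13_tr:
  assumes A: "A \<in> carrier_mat n M" and At: "At \<in> carrier_mat n M"
    and B: "B \<in> carrier_mat nr M" and Bt: "Bt \<in> carrier_mat nr M"
    and U: "U \<in> carrier_mat M M" and R: "R \<in> carrier_mat n n" and P: "P \<in> carrier_mat M M"
    and P': "P' \<in> carrier_mat M M"
  shows "mtrace (R * Qblk13 P P' A B At Bt U) = 2 * froC M (cplxM P) (F13 A B At Bt U R)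
           + (2 * \<i>) * froC M (cplxM P') (F13 A B At Bt U R)"
  unfolding Qblk13_def F13_def Let_def using assms
  by (simp del: assoc_mult_mat add: mtrace_R_add[of R n] tr_Q4[of R n _ M] froC_addR' froC_addL froC_smultL ctrans_mult_carrier
      algebra_simps)

lemma Qblk33_tr:
  assumes A: "A \<in> carrier_mat n M" and B: "B \<in> carrier_mat nr M"
    and R: "R \<in> carrier_mat n n" and P: "P \<in> carrier_mat M M"
    and P': "P' \<in> carrier_mat M M" and P'': "P'' \<in> carrier_mat M M"
  shows "mtrace (R * Qblk33 P P' P'' A B) = froC M (cplxM P) (F33 A B R) + froC M (cplxM P') (F33 A B R)
           + (2 * \<i>) * froC M (cplxM P'') (F33 A B R)"
  unfolding Qblk33_def F33_def using assms
  by (simp del: assoc_mult_mat add: tr_Q3[of R n _ M] froC_addL froC_smultL ctrans_mult_carrier)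


lemma Qblk11_carrier: "A \<in> carrier_mat n M \<Longrightarrow> At \<in> carrier_mat n M \<Longrightarrow> Qblk11 P A B At Bt U \<in> carrier_mat n n"
  unfolding Qblk11_def by auto
lemma Qblk12_carrier: "A \<in> carrier_mat n M \<Longrightarrow> At \<in> carrier_mat n M \<Longrightarrow> Ap \<in> carrier_mat n M \<Longrightarrow> Qblk12 P A B At Ap Bt Bp U \<in> carrier_mat n n"
  unfolding Qblk12_def by auto
lemma Qblk13_carrier: "A \<in> carrier_mat n M \<Longrightarrow> At \<in> carrier_mat n M \<Longrightarrow> Qblk13 P P' A B At Bt U \<in> carrier_mat n n"
  unfolding Qblk13_def Let_def by auto
lemma Qblk33_carrier: "A \<in> carrier_mat n M \<Longrightarrow> Qblk33 P P' P'' A B \<in> carrier_mat n n"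
  unfolding Qblk33_def by auto

lemma sum4: "(\<Sum>p<(4::nat). f p) = f 0 + f 1 + f 2 + f 3"
  by (simp add: eval_nat_numeral)

lemma sens_identity:
  assumes M: "0 < M"
    and A: "A \<in> carrier_mat n M" and At: "At \<in> carrier_mat n M" and Ap: "Ap \<in> carrier_mat n M"
    and B: "B \<in> carrier_mat nr M" and Bt: "Bt \<in> carrier_mat nr M" and Bp: "Bp \<in> carrier_mat nr M"
    and U: "U \<in> carrier_mat M M" and R: "R \<in> carrier_mat n n"
    and Phi: "Phi \<in> carrier_mat (4*M) (4*M)"
    and sym: "\<And>i j. i < 4*M \<Longrightarrow> j < 4*M \<Longrightarrow> Phi $$ (i,j) = Phi $$ (j,i)"
  shows "mtrace (FIM L \<sigma>s A B At Ap Bt Bp U R * Phi) = Re (mtrace (R * Qmat L \<sigma>s Phi A B At Ap Bt Bp U))"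
proof -
  have dA: "dim_col A = M" using A by auto
  define P where "P = subblock M Phi"
  have Pc: "P p q \<in> carrier_mat M M" for p q unfolding P_def by simp
  have Pt: "transpose_mat (P p q) = P q p" if "p < 4" "q < 4" for p q
    unfolding P_def using subblock_trans[OF Phi sym that] .
  define f11 where "f11 = F11 A B At Bt U R"
  define f12 where "f12 = F12 A B At Ap Bt Bp U R"
  define f22 where "f22 = F11 A B Ap Bp U R"
  define f13 where "f13 = F13 A B At Bt U R"
  define f23 where "f23 = F13 A B Ap Bp U R"
  define f33 where "f33 = F33 A B R"
  have fc: "f11 \<in> carrier_mat M M" "f12 \<in> carrier_mat M M" "f22 \<in> carrier_mat M M"
    "f13 \<in> carrier_mat M M" "f23 \<in> carrier_mat M M" "f33 \<in> carrier_mat M M"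
    unfolding f11_def f12_def f22_def f13_def f23_def f33_def
    using F11_carrier[OF A At U R] F12_carrier[OF A At Ap U R] F11_carrier[OF A Ap U R]
      F13_carrier[OF A At U R] F13_carrier[OF A Ap U R] F33_carrier[OF A R] by auto
  have ReMc: "ReM X \<in> carrier_mat M M" "ImM X \<in> carrier_mat M M" if "X \<in> carrier_mat M M" for X
    using that unfolding ReM_def ImM_def by auto
  let ?c = "2 * real L / \<sigma>s\<^sup>2"
  have LHS: "mtrace (FIM L \<sigma>s A B At Ap Bt Bp U R * Phi) =
    ?c * (Re (froC M (cplxM (P 0 0)) f11) + 2 * Re (froC M (cplxM (P 0 1)) f12)
      + 2 * Re (froC M (cplxM (P 0 2)) f13) + 2 * Re (\<i> * froC M (cplxM (P 0 3)) f13)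
      + Re (froC M (cplxM (P 1 1)) f22) + 2 * Re (froC M (cplxM (P 1 2)) f23)
      + 2 * Re (\<i> * froC M (cplxM (P 1 3)) f23)
      + Re (froC M (cplxM (P 2 2)) f33) + 2 * Re (\<i> * froC M (cplxM (P 2 3)) f33)
      + Re (froC M (cplxM (P 3 3)) f33))"
    unfolding FIM_def Let_def dA
    apply (subst mtrace_block4[OF M Phi sym], assumption, assumption)
    unfolding sum4 P_def[symmetric] f11_def[symmetric] f12_def[symmetric] f22_def[symmetric]
      f13_def[symmetric] f23_def[symmetric] f33_def[symmetric]
    using fc Pc ReMc
    apply (simp add: rfro_trans rfro_mtrans Pt rfro_Re rfro_mIm)
    done
  note Qd = carrier_matD[OF Qblk11_carrier[OF A At]] carrier_matD[OF Qblk11_carrier[OF A Ap]]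
    carrier_matD[OF Qblk12_carrier[OF A At Ap]] carrier_matD[OF Qblk13_carrier[OF A At]]
    carrier_matD[OF Qblk13_carrier[OF A Ap]] carrier_matD[OF Qblk33_carrier[OF A]]
  have RHS: "mtrace (R * Qmat L \<sigma>s Phi A B At Ap Bt Bp U) =
    complex_of_real ?c * (froC M (cplxM (P 0 0)) f11 + 2 * froC M (cplxM (P 0 1)) f12
      + (2 * froC M (cplxM (P 0 2)) f13 + (2 * \<i>) * froC M (cplxM (P 0 3)) f13)
      + froC M (cplxM (P 1 1)) f22 + (2 * froC M (cplxM (P 1 2)) f23
      + (2 * \<i>) * froC M (cplxM (P 1 3)) f23)
      + (froC M (cplxM (P 2 2)) f33 + froC M (cplxM (P 3 3)) f33 + (2 * \<i>) * froC M (cplxM (P 2 3)) f33))"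
    unfolding Qmat_def Let_def dA P_def[symmetric]
    using Pc
    by (simp add: Qd mtrace_R_smult[of R n] mtrace_R_add[of R n] R
      Qblk11_tr[OF A At B Bt U R] Qblk11_tr[OF A Ap B Bp U R] Qblk12_tr[OF A At Ap B Bt Bp U R]
      Qblk13_tr[OF A At B Bt U R] Qblk13_tr[OF A Ap B Bp U R] Qblk33_tr[OF A B R]
      f11_def f12_def f22_def f13_def f23_def f33_def)
  show ?thesis unfolding LHS RHS by (simp add: algebra_simps)
qed


lemma mat_inv_props:
  fixes F :: "real mat"
  assumes F: "F \<in> carrier_mat N N" and inv: "invertible_mat F"
  shows "F * mat_inv F = 1\<^sub>m N" "mat_inv F * F = 1\<^sub>m N" "mat_inv F \<in> carrier_mat N N"
proof -
  have ex: "\<exists>B. inverts_mat F B \<and> inverts_mat B F" using inv unfolding invertible_mat_def by auto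
  hence h: "inverts_mat F (mat_inv F) \<and> inverts_mat (mat_inv F) F"
    unfolding mat_inv_def by (rule someI_ex)
  let ?G = "mat_inv F"
  have 1: "F * ?G = 1\<^sub>m N" using h F unfolding inverts_mat_def by auto
  have 2: "?G * F = 1\<^sub>m (dim_row ?G)" using h unfolding inverts_mat_def by auto
  have c: "dim_col ?G = N" using arg_cong[OF 1, of dim_col] by simp
  have r: "dim_row ?G = N" using arg_cong[OF 2, of dim_col] F by simp
  show "F * ?G = 1\<^sub>m N" by (rule 1)
  show "?G * F = 1\<^sub>m N" using 2 r by simp
  show "?G \<in> carrier_mat N N" using c r by auto
qed

lemma mat_inv_sym:
  fixes F :: "real mat"
  assumes F: "F \<in> carrier_mat N N" and inv: "invertible_mat F" and sym: "transpose_mat F = F"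
  shows "transpose_mat (mat_inv F) = mat_inv F"
proof -
  let ?G = "mat_inv F"
  note p = mat_inv_props[OF F inv]
  have "F * transpose_mat ?G = transpose_mat (?G * F)"
    using transpose_mult[OF p(3) F] sym by simp
  hence FGt: "F * transpose_mat ?G = 1\<^sub>m N" using p(2) by simp
  have "?G = ?G * (F * transpose_mat ?G)" using FGt p(3) by simp
  also have "\<dots> = (?G * F) * transpose_mat ?G" using p(3) F by (simp add: assoc_mult_mat[of _ N N _ N _ N])
  also have "\<dots> = transpose_mat ?G" using p(2) p(3) by simp
  finally show ?thesis by simp
qed

lemma had4_herm:
  assumes c: "X1 \<in> carrier_mat M M" "X2 \<in> carrier_mat M M" "X3 \<in> carrier_mat M M" "X4 \<in> carrier_mat M M"
    "Y1 \<in> carrier_mat M M" "Y2 \<in> carrier_mat M M" "Y3 \<in> carrier_mat M M" "Y4 \<in> carrier_mat M M"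
    and h: "ctrans X1 = X1" "ctrans X2 = X3" "ctrans X4 = X4" "ctrans Y1 = Y1" "ctrans Y2 = Y3" "ctrans Y4 = Y4"
    and ab: "a < M" "b < M"
  shows "(hadamard (transpose_mat X1) Y1 + hadamard (transpose_mat X2) Y2 + hadamard (transpose_mat X3) Y3
          + hadamard (transpose_mat X4) Y4) $$ (b,a)
       = cnj ((hadamard (transpose_mat X1) Y1 + hadamard (transpose_mat X2) Y2 + hadamard (transpose_mat X3) Y3
          + hadamard (transpose_mat X4) Y4) $$ (a,b))"
proof -
  have e: "Z' $$ (i,j) = cnj (Z $$ (j,i))" if "ctrans Z = Z'" "Z \<in> carrier_mat M M" "i < M" "j < M" for Z Z' i j
    using that by (metis carrier_matD ctrans_index)
  have e2: "Z $$ (i,j) = cnj (Z' $$ (j,i))" if "ctrans Z = Z'" "Z \<in> carrier_mat M M" "i < M" "j < M" for Z Z' i j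
    using e[OF that(1,2) that(4,3)] by simp
  show ?thesis using c ab
    e[OF h(1) c(1) ab] e[OF h(2) c(2) ab] e2[OF h(2) c(2) ab] e[OF h(3) c(4) ab]
    e[OF h(4) c(5) ab(2,1)] e[OF h(5) c(6) ab(2,1)] e2[OF h(5) c(6) ab(2,1)] e[OF h(6) c(8) ab(2,1)]
    by (simp add: algebra_simps)
qed

lemma had1_herm:
  assumes c: "X1 \<in> carrier_mat M M" "Y1 \<in> carrier_mat M M"
    and h: "ctrans X1 = X1" "ctrans Y1 = Y1"
    and ab: "a < M" "b < M"
  shows "(hadamard (transpose_mat X1) Y1) $$ (b,a) = cnj ((hadamard (transpose_mat X1) Y1) $$ (a,b))"
proof -
  have e: "Z' $$ (i,j) = cnj (Z $$ (j,i))" if "ctrans Z = Z'" "Z \<in> carrier_mat M M" "i < M" "j < M" for Z Z' i j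
    using that by (metis carrier_matD ctrans_index)
  show ?thesis using c ab e[OF h(1) c(1) ab] e[OF h(2) c(2) ab(2,1)]
    by simp
qed

lemma ctrans_mult_dim: "dim_col A = dim_row B \<Longrightarrow> ctrans (A * B) = ctrans B * ctrans A"
  by (rule ctrans_mult[of A "dim_row A" "dim_col A" B "dim_col B"]) auto

lemma sandwich_ctrans:
  assumes P: "P \<in> carrier_mat n M" and Q: "Q \<in> carrier_mat n M" and V: "V \<in> carrier_mat M M"
    and R: "R \<in> carrier_mat n n" and h: "ctrans R = R"
  shows "ctrans (V * ctrans P * R * Q * ctrans V) = V * ctrans Q * R * P * ctrans V"
  using assms by (simp add: ctrans_mult_dim assoc_dim)

lemma gram_ctrans:
  assumes P: "P \<in> carrier_mat n M" and Q: "Q \<in> carrier_mat n M"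
  shows "ctrans (ctrans P * Q) = ctrans Q * P"
  using assms by (simp add: ctrans_mult_dim)

lemma sandwich2_ctrans:
  assumes P: "P \<in> carrier_mat n M" and Q: "Q \<in> carrier_mat n M"
    and R: "R \<in> carrier_mat n n" and h: "ctrans R = R"
  shows "ctrans (ctrans P * R * Q) = ctrans Q * R * P"
  using assms by (simp add: ctrans_mult_dim assoc_dim)

lemma F11_herm:
  assumes A: "A \<in> carrier_mat n M" and At: "At \<in> carrier_mat n M"
    and B: "B \<in> carrier_mat nr M" and Bt: "Bt \<in> carrier_mat nr M"
    and U: "U \<in> carrier_mat M M" and R: "R \<in> carrier_mat n n" and h: "ctrans R = R"
    and ab: "a < M" "b < M"
  shows "F11 A B At Bt U R $$ (b,a) = cnj (F11 A B At Bt U R $$ (a,b))"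
  unfolding F11_def
  by (rule had4_herm[OF _ _ _ _ _ _ _ _ sandwich_ctrans[OF A A U R h] sandwich_ctrans[OF A At U R h]
     sandwich_ctrans[OF At At U R h] gram_ctrans[OF Bt Bt] gram_ctrans[OF B Bt] gram_ctrans[OF B B] ab])
   (use assms in auto)

lemma F33_herm:
  assumes A: "A \<in> carrier_mat n M" and B: "B \<in> carrier_mat nr M"
    and R: "R \<in> carrier_mat n n" and h: "ctrans R = R"
    and ab: "a < M" "b < M"
  shows "F33 A B R $$ (b,a) = cnj (F33 A B R $$ (a,b))"
  unfolding F33_def
  by (rule had1_herm[OF _ _ sandwich2_ctrans[OF A A R h] gram_ctrans[OF B B] ab])
   (use assms in auto)


lemma block4_sym:
  assumes M: "0 < M"
    and s: "\<And>p q a b. p < 4 \<Longrightarrow> q < 4 \<Longrightarrow> a < M \<Longrightarrow> b < M \<Longrightarrow> blk q p $$ (b,a) = blk p q $$ (a,b)"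
  shows "transpose_mat (c \<cdot>\<^sub>m block4 M blk) = c \<cdot>\<^sub>m block4 M blk"
proof (rule eq_matI)
  fix i j assume "i < dim_row (c \<cdot>\<^sub>m block4 M blk)" "j < dim_col (c \<cdot>\<^sub>m block4 M blk)"
  hence ij: "i < 4*M" "j < 4*M" unfolding block4_def by auto
  have "i div M < 4" "j div M < 4" using ij M by (simp_all add: div_less_iff_less_mult mult.commute)
  moreover have "i mod M < M" "j mod M < M" using M by auto
  ultimately have "blk (j div M) (i div M) $$ (j mod M, i mod M) = blk (i div M) (j div M) $$ (i mod M, j mod M)"
    by (rule s)
  thus "transpose_mat (c \<cdot>\<^sub>m block4 M blk) $$ (i, j) = (c \<cdot>\<^sub>m block4 M blk) $$ (i, j)"
    using ij unfolding block4_def by simp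
qed (auto simp: block4_def)

lemma blk_sym_abstract:
  fixes f11 f12 f13 f22 f23 f33 :: "complex mat"
  assumes fc: "f11 \<in> carrier_mat M M" "f12 \<in> carrier_mat M M" "f22 \<in> carrier_mat M M"
    "f13 \<in> carrier_mat M M" "f23 \<in> carrier_mat M M" "f33 \<in> carrier_mat M M"
   and h11: "\<And>a b. a < M \<Longrightarrow> b < M \<Longrightarrow> f11 $$ (b,a) = cnj (f11 $$ (a,b))"
   and h22: "\<And>a b. a < M \<Longrightarrow> b < M \<Longrightarrow> f22 $$ (b,a) = cnj (f22 $$ (a,b))"
   and h33: "\<And>a b. a < M \<Longrightarrow> b < M \<Longrightarrow> f33 $$ (b,a) = cnj (f33 $$ (a,b))"
   and ab: "a < M" "b < M" and pq: "p < (4::nat)" "q < (4::nat)"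
  shows "(if q = 0 then if p = 0 then ReM f11 else if p = 1 then ReM f12 else if p = 2 then ReM f13 else - ImM f13
          else if q = 1 then if p = 0 then (ReM f12)\<^sup>T else if p = 1 then ReM f22 else if p = 2 then ReM f23 else - ImM f23
          else if q = 2 then if p = 0 then (ReM f13)\<^sup>T else if p = 1 then (ReM f23)\<^sup>T else if p = 2 then ReM f33 else - ImM f33
          else if p = 0 then - (ImM f13)\<^sup>T else if p = 1 then - (ImM f23)\<^sup>T else if p = 2 then - (ImM f33)\<^sup>T else ReM f33) $$ (b, a) =
         (if p = 0 then if q = 0 then ReM f11 else if q = 1 then ReM f12 else if q = 2 then ReM f13 else - ImM f13
          else if p = 1 then if q = 0 then (ReM f12)\<^sup>T else if q = 1 then ReM f22 else if q = 2 then ReM f23 else - ImM f23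
          else if p = 2 then if q = 0 then (ReM f13)\<^sup>T else if q = 1 then (ReM f23)\<^sup>T else if q = 2 then ReM f33 else - ImM f33
          else if q = 0 then - (ImM f13)\<^sup>T else if q = 1 then - (ImM f23)\<^sup>T else if q = 2 then - (ImM f33)\<^sup>T else ReM f33) $$ (a, b)"
proof -
  note cc = fc[THEN carrier_matD(1)] fc[THEN carrier_matD(2)]
  note hh = h11[OF ab] h22[OF ab] h33[OF ab]
  have p4: "p = 0 \<or> p = 1 \<or> p = 2 \<or> p = 3" and q4: "q = 0 \<or> q = 1 \<or> q = 2 \<or> q = 3" using pq by arith+
  show ?thesis using p4 q4 by (elim disjE) (simp_all add: ab ReM_def ImM_def cc hh)
qed

lemma FIM_sym:
  assumes M: "0 < M"
    and A: "A \<in> carrier_mat n M" and At: "At \<in> carrier_mat n M" and Ap: "Ap \<in> carrier_mat n M"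
    and B: "B \<in> carrier_mat nr M" and Bt: "Bt \<in> carrier_mat nr M" and Bp: "Bp \<in> carrier_mat nr M"
    and U: "U \<in> carrier_mat M M" and R: "R \<in> carrier_mat n n" and h: "ctrans R = R"
  shows "transpose_mat (FIM L \<sigma>s A B At Ap Bt Bp U R) = FIM L \<sigma>s A B At Ap Bt Bp U R"
proof -
  have dA: "dim_col A = M" using A by auto
  show ?thesis
    unfolding FIM_def Let_def dA
    apply (rule block4_sym[OF M])
    apply (rule blk_sym_abstract[OF F11_carrier[OF A At U R] F12_carrier[OF A At Ap U R] F11_carrier[OF A Ap U R]
      F13_carrier[OF A At U R] F13_carrier[OF A Ap U R] F33_carrier[OF A R]
      F11_herm[OF A At B Bt U R h] F11_herm[OF A Ap B Bp U R h] F33_herm[OF A B R h]])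
    by assumption+
qed


lemma diagc_carrier[simp]: "diagc K f \<in> carrier_mat K K"
  unfolding diagc_def by auto

lemma diagc_dim[simp]: "dim_row (diagc K f) = K" "dim_col (diagc K f) = K"
  unfolding diagc_def by auto

lemma diag_right:
  fixes X :: "complex mat"
  assumes X: "X \<in> carrier_mat n K" and i: "i < n" and k: "k < K"
  shows "(X * diagc K f) $$ (i,k) = X $$ (i,k) * f k"
proof -
  have "(X * diagc K f) $$ (i,k) = (\<Sum>l<K. X $$ (i,l) * diagc K f $$ (l,k))"
    by (rule mult_entry[OF X diagc_carrier i k])
  also have "\<dots> = (\<Sum>l<K. if l = k then X $$ (i,k) * f k else 0)"
    using k by (intro sum.cong refl) (auto simp: diagc_def)
  also have "\<dots> = X $$ (i,k) * f k" using k by simp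
  finally show ?thesis .
qed

lemma mtrace_diag:
  fixes Y :: "complex mat"
  assumes Y: "Y \<in> carrier_mat K K"
  shows "mtrace (Y * diagc K f) = (\<Sum>k<K. Y $$ (k,k) * f k)"
  unfolding mtrace_def using Y by (simp only: index_mult_mat(2) carrier_matD) (intro sum.cong refl diag_right[OF Y], auto)

lemma comm_lin:
  assumes H: "H \<in> carrier_mat Nt K" and W: "W \<in> carrier_mat Nt (K + Ns)"
  shows "mtrace (Wcomm K W * diagc K f * ctrans H) = (\<Sum>k<K. hw H W k k * f k)"
proof -
  have Wc: "Wcomm K W \<in> carrier_mat Nt K" using W unfolding Wcomm_def by auto
  have "mtrace (Wcomm K W * diagc K f * ctrans H) = mtrace (ctrans H * (Wcomm K W * diagc K f))"
    by (rule mtrace_comm[of _ Nt K]) (use H Wc in auto)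
  also have "ctrans H * (Wcomm K W * diagc K f) = (ctrans H * Wcomm K W) * diagc K f"
    using H Wc by (simp add: assoc_mult_mat[of _ K Nt _ K _ K])
  also have "mtrace \<dots> = (\<Sum>k<K. (ctrans H * Wcomm K W) $$ (k,k) * f k)"
    by (rule mtrace_diag) (use H Wc in auto)
  also have "\<dots> = (\<Sum>k<K. hw H W k k * f k)"
  proof (intro sum.cong refl)
    fix k assume k: "k \<in> {..<K}"
    have "(ctrans H * Wcomm K W) $$ (k,k) = (\<Sum>i<Nt. ctrans H $$ (k,i) * Wcomm K W $$ (i,k))"
      by (rule mult_entry[of _ K Nt _ K]) (use H Wc k in auto)
    also have "\<dots> = (\<Sum>i<Nt. ctrans H $$ (k,i) * W $$ (i,k))"
      using W k by (intro sum.cong refl) (auto simp: Wcomm_def)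
    also have "\<dots> = hw H W k k"
      unfolding hw_def by (rule mult_entry[of _ K Nt _ "K+Ns", symmetric]) (use H W k in auto)
    finally show "(ctrans H * Wcomm K W) $$ (k,k) * f k = hw H W k k * f k" by simp
  qed
  finally show ?thesis .
qed

lemma comm_quad:
  assumes H: "H \<in> carrier_mat Nt K" and W: "W \<in> carrier_mat Nt (K + Ns)"
  shows "mtrace (W * ctrans W * H * diagc K f * ctrans H)
       = (\<Sum>k<K. complex_of_real (\<Sum>j<K+Ns. (cmod (hw H W k j))\<^sup>2) * f k)"
proof -
  let ?G = "ctrans H * W"
  have G: "?G \<in> carrier_mat K (K+Ns)" using H W by (intro carrier_matI) auto
  have X: "W * ctrans W * H * diagc K f \<in> carrier_mat Nt K" using H W by (intro carrier_matI) (auto simp: diagc_def)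
  have "mtrace (W * ctrans W * H * diagc K f * ctrans H) = mtrace (ctrans H * (W * ctrans W * H * diagc K f))"
    by (rule mtrace_comm[of _ Nt K]) (use H X in auto)
  also have "ctrans H * (W * ctrans W * H * diagc K f) = (?G * ctrans ?G) * diagc K f"
    using H W by (simp add: ctrans_mult_dim assoc_dim)
  also have "mtrace \<dots> = (\<Sum>k<K. (?G * ctrans ?G) $$ (k,k) * f k)"
    by (rule mtrace_diag) (use G in auto)
  also have "\<dots> = (\<Sum>k<K. complex_of_real (\<Sum>j<K+Ns. (cmod (hw H W k j))\<^sup>2) * f k)"
  proof (intro sum.cong refl)
    fix k assume k: "k \<in> {..<K}"
    have "(?G * ctrans ?G) $$ (k,k) = (\<Sum>j<K+Ns. ?G $$ (k,j) * ctrans ?G $$ (j,k))"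
      by (rule mult_entry[of _ K "K+Ns" _ K]) (use G k in auto)
    also have "\<dots> = (\<Sum>j<K+Ns. complex_of_real ((cmod (hw H W k j))\<^sup>2))"
    proof (intro sum.cong refl)
      fix j assume j: "j \<in> {..<K+Ns}"
      have "?G $$ (k,j) * ctrans ?G $$ (j,k) = ?G $$ (k,j) * cnj (?G $$ (k,j))"
        using G k j by (subst ctrans_index) auto
      also have "\<dots> = complex_of_real ((cmod (?G $$ (k,j)))\<^sup>2)"
        by (rule complex_norm_square[symmetric])
      finally show "?G $$ (k,j) * ctrans ?G $$ (j,k) = complex_of_real ((cmod (hw H W k j))\<^sup>2)"
        unfolding hw_def .
    qed
    also have "\<dots> = complex_of_real (\<Sum>j<K+Ns. (cmod (hw H W k j))\<^sup>2)" by simp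
    finally show "(?G * ctrans ?G) $$ (k,k) * f k = complex_of_real (\<Sum>j<K+Ns. (cmod (hw H W k j))\<^sup>2) * f k"
      by simp
  qed
  finally show ?thesis .
qed


lemma block4_carrier: "block4 M blk \<in> carrier_mat (4*M) (4*M)"
  unfolding block4_def by simp

lemma arith_id: fixes d1 d2 X Y Z T F :: real
  shows "d1 * (X + 2*Y - Z) + d2*(T - 2*F) = 2*d1*Y + d2*T - d1*Z + (d1*X - d2*(2*F))"
  by (simp add: algebra_simps)

lemma arith_id2: fixes l r x b s1 s2 q :: real
  shows "l + 2*r - x - b*(s1 + s2 + q) = (l - x - b*q) + 2*r - (s1+s2)*b"
  by (simp add: algebra_simps)

lemma sum_split_KN: fixes K Ns :: nat shows "(\<Sum>j<K+Ns. g j) = (\<Sum>j<K. g j) + (\<Sum>j\<in>{K..<K+Ns}. (g j :: real))"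
proof -
  have e: "{..<K+Ns} = {..<K} \<union> {K..<K+Ns}" by auto
  have "sum g {..<K+Ns} = sum g ({..<K} \<union> {K..<K+Ns})" using e by (rule arg_cong)
  also have "\<dots> = sum g {..<K} + sum g {K..<K+Ns}" by (rule sum.union_disjoint) auto
  finally show ?thesis .
qed

theorem proposition2:
  fixes Nt Nr K M L Ns :: nat
    and H :: "complex mat" and \<sigma>c :: "nat \<Rightarrow> real" and \<sigma>s \<delta>c \<delta>s Pt :: real
    and a b :: "real \<times> real \<Rightarrow> nat \<Rightarrow> complex"
    and \<theta> \<phi> :: "nat \<Rightarrow> real" and \<alpha> :: "nat \<Rightarrow> complex"
    and Wt :: "complex mat"
  assumes "0 < Nt" and "0 < Nr" and "0 < K" and "0 < M" and "0 < L"
    and "H \<in> carrier_mat Nt K"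
    and "\<forall>k<K. 0 < \<sigma>c k" and "0 < \<sigma>s" and "0 \<le> \<delta>c" and "0 \<le> \<delta>s" and "0 < Pt"
    and "\<forall>i<Nt. \<forall>p. (\<lambda>q. a q i) differentiable (at p)"
    and "\<forall>i<Nr. \<forall>p. (\<lambda>q. b q i) differentiable (at p)"
    and "Wt \<in> carrier_mat Nt (K + Ns)" and "mtrace (Wt * ctrans Wt) = complex_of_real Pt"
    and "invertible_mat (sensFIM Nt Nr M L \<sigma>s a b \<theta> \<phi> \<alpha> (Wt * ctrans Wt))"
  shows "\<exists>c::real. \<forall>W. W \<in> carrier_mat Nt (K + Ns) \<and> mtrace (W * ctrans W) = complex_of_real Pt \<longrightarrow>
     \<delta>c * (\<Sum>k<K. rsur K Ns H \<sigma>c Wt W k)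
       + \<delta>s * (mtrace (sensFIM Nt Nr M L \<sigma>s a b \<theta> \<phi> \<alpha> (W * ctrans W)
                  * (mat_inv (sensFIM Nt Nr M L \<sigma>s a b \<theta> \<phi> \<alpha> (Wt * ctrans Wt))
                     * mat_inv (sensFIM Nt Nr M L \<sigma>s a b \<theta> \<phi> \<alpha> (Wt * ctrans Wt))))
               - 2 * mtrace (sensFIM Nt Nr M L \<sigma>s a b \<theta> \<phi> \<alpha> (Wt * ctrans Wt)))
     = 2 * \<delta>c * Re (mtrace (Wcomm K W * diagc K (eta K Ns H \<sigma>c Wt) * ctrans H))
       + \<delta>s * Re (mtrace (W * ctrans W
            * sensQ Nt Nr M L \<sigma>s a b \<theta> \<phi> \<alpha>
                (mat_inv (sensFIM Nt Nr M L \<sigma>s a b \<theta> \<phi> \<alpha> (Wt * ctrans Wt))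
                 * mat_inv (sensFIM Nt Nr M L \<sigma>s a b \<theta> \<phi> \<alpha> (Wt * ctrans Wt)))))
       - \<delta>c * Re (mtrace (W * ctrans W * H * diagc K (\<lambda>k. complex_of_real (beta K Ns H \<sigma>c Wt k)) * ctrans H))
       + c"
proof -
  note H = assms(6) and Wt = assms(14) and inv = assms(16) and M = assms(4)
  define A where "A = steer Nt M a \<theta> \<phi>"
  define B where "B = steer Nr M b \<theta> \<phi>"
  define At where "At = dsteer_theta Nt M a \<theta> \<phi>"
  define Ap where "Ap = dsteer_phi Nt M a \<theta> \<phi>"
  define Bt where "Bt = dsteer_theta Nr M b \<theta> \<phi>"
  define Bp where "Bp = dsteer_phi Nr M b \<theta> \<phi>"
  define U where "U = diagc M \<alpha>"
  have cA: "A \<in> carrier_mat Nt M" "At \<in> carrier_mat Nt M" "Ap \<in> carrier_mat Nt M"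
    unfolding A_def At_def Ap_def steer_def dsteer_theta_def dsteer_phi_def by auto
  have cB: "B \<in> carrier_mat Nr M" "Bt \<in> carrier_mat Nr M" "Bp \<in> carrier_mat Nr M"
    unfolding B_def Bt_def Bp_def steer_def dsteer_theta_def dsteer_phi_def by auto
  have cU: "U \<in> carrier_mat M M" unfolding U_def by simp
  have sF: "sensFIM Nt Nr M L \<sigma>s a b \<theta> \<phi> \<alpha> X = FIM L \<sigma>s A B At Ap Bt Bp U X" for X
    unfolding sensFIM_def A_def B_def At_def Ap_def Bt_def Bp_def U_def ..
  have sQ: "sensQ Nt Nr M L \<sigma>s a b \<theta> \<phi> \<alpha> X = Qmat L \<sigma>s X A B At Ap Bt Bp U" for X
    unfolding sensQ_def A_def B_def At_def Ap_def Bt_def Bp_def U_def ..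
  define Rt where "Rt = Wt * ctrans Wt"
  have cRt: "Rt \<in> carrier_mat Nt Nt" unfolding Rt_def using Wt by auto
  have hRt: "ctrans Rt = Rt" unfolding Rt_def using Wt by (simp add: ctrans_mult_dim)
  define F0 where "F0 = FIM L \<sigma>s A B At Ap Bt Bp U Rt"
  have dA: "dim_col A = M" using cA by auto
  have cF0: "F0 \<in> carrier_mat (4*M) (4*M)"
    unfolding F0_def FIM_def Let_def dA by (rule smult_carrier_mat[OF block4_carrier])
  have invF0: "invertible_mat F0" using inv unfolding F0_def Rt_def sF .
  have symF0: "transpose_mat F0 = F0"
    unfolding F0_def by (rule FIM_sym[OF M cA cB cU cRt hRt])
  define G where "G = mat_inv F0"
  have cG: "G \<in> carrier_mat (4*M) (4*M)" unfolding G_def by (rule mat_inv_props(3)[OF cF0 invF0])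
  have symG: "transpose_mat G = G" unfolding G_def by (rule mat_inv_sym[OF cF0 invF0 symF0])
  define Phi where "Phi = G * G"
  have cPhi: "Phi \<in> carrier_mat (4*M) (4*M)" unfolding Phi_def using cG by auto
  have tPhi: "transpose_mat Phi = Phi" unfolding Phi_def using transpose_mult[OF cG cG] symG by simp
  have symPhi: "Phi $$ (i,j) = Phi $$ (j,i)" if "i < 4*M" "j < 4*M" for i j
  proof -
    have "Phi $$ (j,i) = transpose_mat Phi $$ (j,i)" using tPhi by simp
    also have "\<dots> = Phi $$ (i,j)" using that cPhi by simp
    finally show ?thesis by simp
  qed
  define xiT where "xiT = xi K Ns H \<sigma>c Wt"
  define etaT where "etaT = eta K Ns H \<sigma>c Wt"
  define betaT where "betaT = beta K Ns H \<sigma>c Wt"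
  define c where "c = \<delta>c * (\<Sum>k<K. ln (1 + xiT k) - xiT k - betaT k * (\<sigma>c k)\<^sup>2) - \<delta>s * (2 * mtrace F0)"
  show ?thesis
  proof (intro exI[of _ c] allI impI, elim conjE)
    fix W :: "complex mat" assume W: "W \<in> carrier_mat Nt (K + Ns)"
    define S where "S k = (\<Sum>j<K+Ns. (cmod (hw H W k j))\<^sup>2)" for k
    have cR: "W * ctrans W \<in> carrier_mat Nt Nt" using W by auto
    have sens: "mtrace (FIM L \<sigma>s A B At Ap Bt Bp U (W * ctrans W) * Phi)
        = Re (mtrace (W * ctrans W * Qmat L \<sigma>s Phi A B At Ap Bt Bp U))"
      by (rule sens_identity[OF M cA cB cU cR cPhi symPhi])
    have lin: "Re (mtrace (Wcomm K W * diagc K etaT * ctrans H)) = (\<Sum>k<K. Re (hw H W k k * etaT k))"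
      using comm_lin[OF H W] by (simp add: Re_sum)
    have quad: "Re (mtrace (W * ctrans W * H * diagc K (\<lambda>k. complex_of_real (betaT k)) * ctrans H))
        = (\<Sum>k<K. S k * betaT k)"
      using comm_quad[OF H W] unfolding S_def by (simp add: Re_sum)
    have rs: "rsur K Ns H \<sigma>c Wt W k = (ln (1 + xiT k) - xiT k - betaT k * (\<sigma>c k)\<^sup>2)
        + 2 * Re (hw H W k k * etaT k) - S k * betaT k" for k
      unfolding rsur_def xiT_def[symmetric] etaT_def[symmetric] betaT_def[symmetric] S_def sum_split_KN
      by (rule arith_id2)
    have rsum: "(\<Sum>k<K. rsur K Ns H \<sigma>c Wt W k) = (\<Sum>k<K. ln (1 + xiT k) - xiT k - betaT k * (\<sigma>c k)\<^sup>2)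
        + 2 * (\<Sum>k<K. Re (hw H W k k * etaT k)) - (\<Sum>k<K. S k * betaT k)"
      unfolding rs by (simp add: sum.distrib sum_subtractf sum_distrib_left)
    show "\<delta>c * (\<Sum>k<K. rsur K Ns H \<sigma>c Wt W k)
       + \<delta>s * (mtrace (sensFIM Nt Nr M L \<sigma>s a b \<theta> \<phi> \<alpha> (W * ctrans W)
                  * (mat_inv (sensFIM Nt Nr M L \<sigma>s a b \<theta> \<phi> \<alpha> (Wt * ctrans Wt))
                     * mat_inv (sensFIM Nt Nr M L \<sigma>s a b \<theta> \<phi> \<alpha> (Wt * ctrans Wt))))
               - 2 * mtrace (sensFIM Nt Nr M L \<sigma>s a b \<theta> \<phi> \<alpha> (Wt * ctrans Wt)))
     = 2 * \<delta>c * Re (mtrace (Wcomm K W * diagc K (eta K Ns H \<sigma>c Wt) * ctrans H))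
       + \<delta>s * Re (mtrace (W * ctrans W
            * sensQ Nt Nr M L \<sigma>s a b \<theta> \<phi> \<alpha>
                (mat_inv (sensFIM Nt Nr M L \<sigma>s a b \<theta> \<phi> \<alpha> (Wt * ctrans Wt))
                 * mat_inv (sensFIM Nt Nr M L \<sigma>s a b \<theta> \<phi> \<alpha> (Wt * ctrans Wt)))))
       - \<delta>c * Re (mtrace (W * ctrans W * H * diagc K (\<lambda>k. complex_of_real (beta K Ns H \<sigma>c Wt k)) * ctrans H))
       + c"
      unfolding sF sQ Rt_def[symmetric] F0_def[symmetric] G_def[symmetric] Phi_def[symmetric]
        etaT_def[symmetric] betaT_def[symmetric] sens lin quad rsum c_def
      by (rule arith_id)
  qed
qed

end
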